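(* For any constant $\beta\ge 0$, there exists an indivisible-goods instance in which no allocation selected by the maximum Nash welfare (MNW) rule satisfies EJR-$\beta$.
   Context: Model: There is a set of agents $N=\{1,\dots,n\}$. The resource $R$ consists of a cake $C=[0,c]$ for a real $c\ge 0$ and a set of indivisible goods $G=\{g_1,\dots,g_m\}$ for an integer $m\ge 0$, with $\max(c,m)>0$. A bundle $R'=(C',G')$ consists of a piece of cake $C'\subseteq C$ (finite union of disjoint closed intervals, with total length $\ell(C')$) and a set $G'\subseteq G$; its size is $s(R')=\ell(C')+|G'|$. Each agent $i$ approves a bundle $R_i=(C_i,G_i)$, and her utility for a bundle $R'$ is $u_i(R')=\ell(C_i\cap C')+|G_i\cap G'|$. A parameter $\alpha\in(0,c+m]$ is given; an allocation is a bundle $A$ with $s(A)\le\alpha$. An indivisible-goods instance is one with $c=0$. For a real $t>0$, a group $N^*\subseteq N$ is $t$-cohesive if $|N^*|\ge t\cdot n/\alpha$ and $s(\bigcap_{i\in N^*}R_i)\ge t$. EJR-$\beta$ (for $\beta\ge 0$): an allocation $A$ satisfies EJR-$\beta$ if for every real $t>0$ and every $t$-cohesive group $N^*$, there is $j\in N^*$ with $u_j(A)>t-\beta$. MNW rule: selects an allocation $A$ maximizing $\prod_{i\in N}u_i(A)$; if the maximum product is $0$, it first maximizes the number of agents with positive utility and then maximizes the product of utilities of that set of agents. *)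

theory Defs
  imports Main "HOL.Real"
begin

text \<open>Indivisible-goods instances (cake C = [0,0], contributing nothing).\<close>

definition valid_instance :: "nat set \<Rightarrow> nat set \<Rightarrow> (nat \<Rightarrow> nat set) \<Rightarrow> real \<Rightarrow> bool" where
  "valid_instance N G R \<alpha> \<longleftrightarrow> finite N \<and> N \<noteq> {} \<and> finite G \<and> G \<noteq> {} \<and>
     (\<forall>i\<in>N. R i \<subseteq> G) \<and> 0 < \<alpha> \<and> \<alpha> \<le> real (card G)"

definition is_alloc :: "nat set \<Rightarrow> real \<Rightarrow> nat set \<Rightarrow> bool" where
  "is_alloc G \<alpha> A \<longleftrightarrow> A \<subseteq> G \<and> real (card A) \<le> \<alpha>"

definition util :: "(nat \<Rightarrow> nat set) \<Rightarrow> nat \<Rightarrow> nat set \<Rightarrow> nat" where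
  "util R i A = card (R i \<inter> A)"

definition cohesive :: "nat set \<Rightarrow> (nat \<Rightarrow> nat set) \<Rightarrow> real \<Rightarrow> real \<Rightarrow> nat set \<Rightarrow> bool" where
  "cohesive N R \<alpha> t S \<longleftrightarrow> S \<subseteq> N \<and> real (card S) \<ge> t * real (card N) / \<alpha> \<and>
     real (card (\<Inter>i\<in>S. R i)) \<ge> t"

definition EJR :: "nat set \<Rightarrow> (nat \<Rightarrow> nat set) \<Rightarrow> real \<Rightarrow> real \<Rightarrow> nat set \<Rightarrow> bool" where
  "EJR N R \<alpha> \<beta> A \<longleftrightarrow> (\<forall>t::real. t > 0 \<longrightarrow> (\<forall>S. cohesive N R \<alpha> t S \<longrightarrow>
     (\<exists>j\<in>S. real (util R j A) > t - \<beta>)))"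

definition pos_agents :: "nat set \<Rightarrow> (nat \<Rightarrow> nat set) \<Rightarrow> nat set \<Rightarrow> nat set" where
  "pos_agents N R A = {i\<in>N. util R i A > 0}"

definition MNW :: "nat set \<Rightarrow> nat set \<Rightarrow> (nat \<Rightarrow> nat set) \<Rightarrow> real \<Rightarrow> nat set \<Rightarrow> bool" where
  "MNW N G R \<alpha> A \<longleftrightarrow> is_alloc G \<alpha> A \<and>
    (if (\<exists>B. is_alloc G \<alpha> B \<and> (\<Prod>i\<in>N. util R i B) > 0)
     then (\<forall>B. is_alloc G \<alpha> B \<longrightarrow> (\<Prod>i\<in>N. util R i B) \<le> (\<Prod>i\<in>N. util R i A))
     else (\<forall>B. is_alloc G \<alpha> B \<longrightarrow> card (pos_agents N R B) \<le> card (pos_agents N R A)) \<and>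
          (\<forall>B. is_alloc G \<alpha> B \<and> card (pos_agents N R B) = card (pos_agents N R A) \<longrightarrow>
               (\<Prod>i\<in>pos_agents N R B. util R i B) \<le> (\<Prod>i\<in>pos_agents N R A. util R i A)))"

end

theory Submission
  imports Defs
begin

definition RR :: "nat \<Rightarrow> nat \<Rightarrow> nat set" where
  "RR t i = (if i < 2*t then {0..<t} else {i - t})"

lemma util_RR_low: "i < 2*t \<Longrightarrow> util (RR t) i A = card ({0..<t} \<inter> A)"
  by (simp add: util_def RR_def)

lemma util_RR_high: "\<not> i < 2*t \<Longrightarrow> util (RR t) i A = (if i - t \<in> A then 1 else 0)"
  by (simp add: util_def RR_def)

lemma valid: "t \<ge> 1 \<Longrightarrow> valid_instance {0..<4*t} {0..<3*t} (RR t) (real (2*t))"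
  unfolding valid_instance_def RR_def by auto

lemma no_pos:
  assumes "t \<ge> 1" "is_alloc {0..<3*t} (real (2*t)) B"
  shows "\<not> (\<Prod>i\<in>{0..<4*t}. util (RR t) i B) > 0"
proof
  assume "(\<Prod>i\<in>{0..<4*t}. util (RR t) i B) > 0"
  hence all: "\<And>i. i < 4*t \<Longrightarrow> util (RR t) i B > 0"
    by (metis atLeastLessThan_iff finite_atLeastLessThan less_nat_zero_code
        not_gr_zero prod_zero_iff zero_le)
  have "util (RR t) 0 B > 0" using all assms(1) by simp
  hence "card ({0..<t} \<inter> B) > 0" using assms(1) util_RR_low[of 0 t B] by simp
  then obtain x where x: "x \<in> B" "x < t" by (metis Int_iff atLeastLessThan_iff card_gt_0_iff equals0I)
  have U: "{t..<3*t} \<subseteq> B"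
  proof
    fix u assume u: "u \<in> {t..<3*t}"
    have "util (RR t) (u+t) B > 0" using all u by auto
    thus "u \<in> B" using util_RR_high[of "u+t" t B] u by (auto split: if_splits)
  qed
  have "insert x {t..<3*t} \<subseteq> B" using U x by auto
  moreover have "finite B" using assms(2) unfolding is_alloc_def by (meson finite_atLeastLessThan finite_subset)
  ultimately have "card (insert x {t..<3*t}) \<le> card B" by (rule card_mono[rotated])
  moreover have "card (insert x {t..<3*t}) = 2*t+1" using x by simp
  ultimately show False using assms(2) unfolding is_alloc_def by linarith
qed

lemma swap:
  assumes "t \<ge> 1" "is_alloc {0..<3*t} (real (2*t)) A"
    and "card ({0..<t} \<inter> A) \<ge> 2"
  shows "\<exists>B. is_alloc {0..<3*t} (real (2*t)) B \<and>
     card (pos_agents {0..<4*t} (RR t) A) < card (pos_agents {0..<4*t} (RR t) B)"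
proof -
  have AG: "A \<subseteq> {0..<3*t}" and cA: "card A \<le> 2*t" using assms(2) unfolding is_alloc_def by auto
  have fA: "finite A" using AG finite_subset by blast
  have "card ({0..<t} \<inter> A) + card ({t..<3*t} \<inter> A) = card (({0..<t} \<inter> A) \<union> ({t..<3*t} \<inter> A))"
    by (rule card_Un_disjoint[symmetric]) (use fA in auto)
  also have "\<dots> \<le> card A" by (rule card_mono[OF fA]) auto
  finally have "card ({t..<3*t} \<inter> A) < card {t..<3*t}" using assms(3) cA by simp
  hence "\<not> {t..<3*t} \<subseteq> A"
    by (metis Int_absorb2 order_less_irrefl)
  then obtain u where u: "u \<in> {t..<3*t}" "u \<notin> A" by blast
  have "card ({0..<t} \<inter> A) > 1" using assms(3) by simp
  then obtain x y where xy: "x \<in> {0..<t} \<inter> A" "y \<in> {0..<t} \<inter> A" "x \<noteq> y"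
  proof -
    have "\<not> (\<forall>x\<in>{0..<t} \<inter> A. \<forall>y\<in>{0..<t} \<inter> A. x = y)"
      using card_le_Suc0_iff_eq[of "{0..<t} \<inter> A"] \<open>card ({0..<t} \<inter> A) > 1\<close> by simp
    thus ?thesis using that by blast
  qed
  define B where "B = insert u (A - {x})"
  have cB: "card B = card A" unfolding B_def using u xy fA
    by (simp add: card_Diff_singleton) (metis Suc_pred card_gt_0_iff emptyE IntD2 xy(1))
  have allocB: "is_alloc {0..<3*t} (real (2*t)) B"
    unfolding is_alloc_def using cB cA AG u unfolding B_def by auto
  have "y \<in> B" unfolding B_def using xy by auto
  have fP: "finite (pos_agents {0..<4*t} (RR t) B)" unfolding pos_agents_def by auto
  have sub: "pos_agents {0..<4*t} (RR t) A \<subseteq> pos_agents {0..<4*t} (RR t) B"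
  proof
    fix i assume i: "i \<in> pos_agents {0..<4*t} (RR t) A"
    show "i \<in> pos_agents {0..<4*t} (RR t) B"
    proof (cases "i < 2*t")
      case True
      have "y \<in> {0..<t} \<inter> B" using \<open>y \<in> B\<close> xy by auto
      hence "card ({0..<t} \<inter> B) > 0" by (metis card_gt_0_iff emptyE finite_Int finite_atLeastLessThan)
      thus ?thesis using i True util_RR_low[of i t B] unfolding pos_agents_def by auto
    next
      case False
      have "i - t \<in> A" using i False util_RR_high[of i t A] unfolding pos_agents_def
        by (auto split: if_splits)
      moreover have "i - t \<noteq> x" using False xy by auto
      ultimately have "i - t \<in> B" unfolding B_def by auto
      thus ?thesis using i False util_RR_high[of i t B] unfolding pos_agents_def by auto
    qed
  qed
  have new: "u + t \<in> pos_agents {0..<4*t} (RR t) B"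
    using u util_RR_high[of "u+t" t B] unfolding pos_agents_def B_def by auto
  have notin: "u + t \<notin> pos_agents {0..<4*t} (RR t) A"
    using u util_RR_high[of "u+t" t A] unfolding pos_agents_def by auto
  have "pos_agents {0..<4*t} (RR t) A \<subset> pos_agents {0..<4*t} (RR t) B"
    using sub new notin by blast
  hence "card (pos_agents {0..<4*t} (RR t) A) < card (pos_agents {0..<4*t} (RR t) B)"
    using fP psubset_card_mono by blast
  thus ?thesis using allocB by blast
qed

lemma main:
  assumes "t \<ge> 1" "real t \<ge> \<beta> + 1"
  shows "\<forall>A. MNW {0..<4*t} {0..<3*t} (RR t) (real (2*t)) A \<longrightarrow> \<not> EJR {0..<4*t} (RR t) (real (2*t)) \<beta> A"
proof (intro allI impI)
  fix A assume M: "MNW {0..<4*t} {0..<3*t} (RR t) (real (2*t)) A"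
  have alloc: "is_alloc {0..<3*t} (real (2*t)) A" using M unfolding MNW_def by blast
  have "\<not> (\<exists>B. is_alloc {0..<3*t} (real (2*t)) B \<and> (\<Prod>i\<in>{0..<4*t}. util (RR t) i B) > 0)"
    using no_pos[OF assms(1)] by blast
  hence mx: "\<forall>B. is_alloc {0..<3*t} (real (2*t)) B \<longrightarrow>
     card (pos_agents {0..<4*t} (RR t) B) \<le> card (pos_agents {0..<4*t} (RR t) A)"
    using M unfolding MNW_def by (simp only: if_False) blast
  have le1: "card ({0..<t} \<inter> A) \<le> 1"
  proof (rule ccontr)
    assume "\<not> ?thesis"
    hence "card ({0..<t} \<inter> A) \<ge> 2" by simp
    from swap[OF assms(1) alloc this] mx show False by (meson not_less)
  qed
  have coh: "cohesive {0..<4*t} (RR t) (real (2*t)) (real t) {0..<2*t}"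
  proof -
    have "(\<Inter>i\<in>{0..<2*t}. RR t i) = {0..<t}"
      using assms(1) unfolding RR_def by auto
    moreover have "real t * real (card {0..<4*t}) / real (2*t) = real (2*t)"
      using assms(1) by (simp add: field_simps)
    ultimately show ?thesis unfolding cohesive_def by auto
  qed
  show "\<not> EJR {0..<4*t} (RR t) (real (2*t)) \<beta> A"
  proof
    assume "EJR {0..<4*t} (RR t) (real (2*t)) \<beta> A"
    hence "\<exists>j\<in>{0..<2*t}. real (util (RR t) j A) > real t - \<beta>"
      using coh assms(1) unfolding EJR_def by auto
    then obtain j where "j < 2*t" "real (util (RR t) j A) > real t - \<beta>" by auto
    hence "real (card ({0..<t} \<inter> A)) > real t - \<beta>" using util_RR_low by simp
    with le1 assms(2) show False by linarith
  qed
qed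

theorem mainTheorem4:
  fixes \<beta> :: real
  assumes "\<beta> \<ge> 0"
  shows "\<exists>N G R \<alpha>. valid_instance N G R \<alpha> \<and> (\<forall>A. MNW N G R \<alpha> A \<longrightarrow> \<not> EJR N R \<alpha> \<beta> A)"
proof -
  define t where "t = nat \<lceil>\<beta>\<rceil> + 1"
  have t1: "t \<ge> 1" unfolding t_def by simp
  have tb: "real t \<ge> \<beta> + 1" unfolding t_def using assms
    by (simp add: of_nat_nat)
  show ?thesis using valid[OF t1] main[OF t1 tb] by blast
qed

end
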